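(* Let $D$ be a square-free integer, let $\mathbb{Z}[\sqrt{D}]$ denote the ring of integers of $\mathbb{Q}(\sqrt{D})$, and let $p$ be a prime integer which is irreducible but not prime in $\mathbb{Z}[\sqrt{D}]$. For any $z\in\mathbb{Z}[\sqrt{D}]$, we have $z\in I_p(D)$ if and only if the ideal $\langle p,z\rangle$ of $\mathbb{Z}[\sqrt{D}]$ is non-principal.
   Context: Here $\mathbb{Z}[\sqrt{D}]=\{a+b\sqrt{D}:a,b\in\mathbb{Z}\}$ if $D\equiv 2,3 \pmod 4$ and $\mathbb{Z}[\sqrt{D}]=\{\frac{a+b\sqrt{D}}{2}:a,b\in\mathbb{Z},\ a\equiv b \pmod 2\}$ if $D\equiv 1\pmod 4$. $\langle a_1,\dots,a_k\rangle$ denotes the ideal generated by $a_1,\dots,a_k$. $I_p(D)$ is the set of all non-unit $z\in\mathbb{Z}[\sqrt{D}]$ such that $z\notin\langle p\rangle$ but there exists $m\in\mathbb{Z}[\sqrt{D}]$ with $m\notin\langle p\rangle$ and $zm\in\langle p\rangle$. *)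

theory Defs
  imports Complex_Main "HOL-Computational_Algebra.Squarefree"
begin

text \<open>The ring Z[sqrt D] (ring of integers of Q(sqrt D)), realised as a subring of the
complex numbers, with sqrt D the principal complex square root.\<close>

definition OK :: "int \<Rightarrow> complex set" where
  "OK D = (if D mod 4 = 1
     then {(of_int a + of_int b * csqrt (of_int D)) / 2 | a b. a mod 2 = b mod 2}
     else {of_int a + of_int b * csqrt (of_int D) | a b. True})"

definition dvd_in :: "int \<Rightarrow> complex \<Rightarrow> complex \<Rightarrow> bool" where
  "dvd_in D x y \<longleftrightarrow> (\<exists>k\<in>OK D. y = x * k)"

definition unit_in :: "int \<Rightarrow> complex \<Rightarrow> bool" where
  "unit_in D z \<longleftrightarrow> z \<in> OK D \<and> (\<exists>w\<in>OK D. z * w = 1)"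

definition irreducible_in :: "int \<Rightarrow> complex \<Rightarrow> bool" where
  "irreducible_in D x \<longleftrightarrow> x \<in> OK D \<and> x \<noteq> 0 \<and> \<not> unit_in D x \<and>
     (\<forall>a\<in>OK D. \<forall>b\<in>OK D. x = a * b \<longrightarrow> unit_in D a \<or> unit_in D b)"

definition prime_in :: "int \<Rightarrow> complex \<Rightarrow> bool" where
  "prime_in D x \<longleftrightarrow> x \<in> OK D \<and> x \<noteq> 0 \<and> \<not> unit_in D x \<and>
     (\<forall>a\<in>OK D. \<forall>b\<in>OK D. dvd_in D x (a * b) \<longrightarrow> dvd_in D x a \<or> dvd_in D x b)"

definition ideal1 :: "int \<Rightarrow> complex \<Rightarrow> complex set" where
  "ideal1 D g = {g * x | x. x \<in> OK D}"

definition ideal2 :: "int \<Rightarrow> complex \<Rightarrow> complex \<Rightarrow> complex set" where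
  "ideal2 D a b = {a * x + b * y | x y. x \<in> OK D \<and> y \<in> OK D}"

definition principal_in :: "int \<Rightarrow> complex set \<Rightarrow> bool" where
  "principal_in D I \<longleftrightarrow> (\<exists>g\<in>OK D. I = ideal1 D g)"

definition Ip :: "int \<Rightarrow> int \<Rightarrow> complex set" where
  "Ip p D = {z \<in> OK D. \<not> unit_in D z \<and> z \<notin> ideal1 D (of_int p) \<and>
     (\<exists>m\<in>OK D. m \<notin> ideal1 D (of_int p) \<and> z * m \<in> ideal1 D (of_int p))}"

end

theory Submission
  imports Defs
begin

definition ww :: "int \<Rightarrow> complex" where
  "ww D = (if D mod 4 = 1 then (1 + csqrt (of_int D)) / 2 else csqrt (of_int D))"

definition tt :: "int \<Rightarrow> int" where
  "tt D = (if D mod 4 = 1 then 1 else 0)"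

definition nn :: "int \<Rightarrow> int" where
  "nn D = (if D mod 4 = 1 then (D - 1) div 4 else D)"

lemma ww_sq: "ww D * ww D = of_int (tt D) * ww D + of_int (nn D)"
proof (cases "D mod 4 = 1")
  case True
  have s2: "csqrt (of_int D) * csqrt (of_int D) = (of_int D :: complex)"
    using power2_csqrt[of "of_int D"] by (simp add: power2_eq_square)
  have d: "D - 1 = 4 * ((D - 1) div 4)" using True by presburger
  define k where "k = (D - 1) div 4"
  have hD: "(of_int D :: complex) = 1 + 4 * of_int k"
  proof -
    have "D = 1 + 4 * k" using d k_def by simp
    then show ?thesis by simp
  qed
  have "ww D * ww D = (1 + 2 * csqrt (of_int D) + csqrt (of_int D) * csqrt (of_int D)) / 4"
    using True by (simp add: ww_def field_simps)
  also have "... = (2 + 2 * csqrt (of_int D) + 4 * of_int k) / 4"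
    using s2 hD by simp
  also have "... = of_int (tt D) * ww D + of_int (nn D)"
    using True by (simp add: ww_def tt_def nn_def k_def[symmetric] field_simps)
  finally show ?thesis .
next
  case False
  then show ?thesis
    using power2_csqrt[of "of_int D"] by (simp add: ww_def tt_def nn_def power2_eq_square)
qed

lemma OK_alt: "OK D = {of_int x + of_int y * ww D | x y. True}"
proof (cases "D mod 4 = 1")
  case True
  show ?thesis
  proof (intro set_eqI iffI)
    fix z assume "z \<in> OK D"
    then obtain a b where ab: "z = (of_int a + of_int b * csqrt (of_int D)) / 2" "a mod 2 = b mod 2"
      using True by (auto simp: OK_def)
    have e: "a = 2 * ((a - b) div 2) + b" using ab(2) by presburger
    have "z = of_int ((a - b) div 2) + of_int b * ww D"
    proof -
      have "(of_int a :: complex) = 2 * of_int ((a - b) div 2) + of_int b"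
        by (subst e) simp
      then show ?thesis using ab(1) True by (simp add: ww_def field_simps)
    qed
    then show "z \<in> {of_int x + of_int y * ww D | x y. True}" by blast
  next
    fix z assume "z \<in> {of_int x + of_int y * ww D | x y. True}"
    then obtain x y where z: "z = of_int x + of_int y * ww D" by blast
    have "z = (of_int (2*x+y) + of_int y * csqrt (of_int D)) / 2"
      using z True by (simp add: ww_def field_simps)
    moreover have "(2*x+y) mod 2 = y mod 2" by presburger
    ultimately show "z \<in> OK D" using True unfolding OK_def by (simp only: if_P) blast
  qed
next
  case False
  then show ?thesis by (simp add: OK_def ww_def)
qed

lemma OK_intro: "of_int x + of_int y * ww D \<in> OK D"
  unfolding OK_alt by blast

lemma OK_elim:
  assumes "z \<in> OK D"
  obtains x y where "z = of_int x + of_int y * ww D"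
  using assms unfolding OK_alt by blast

lemma OK_of_int: "of_int n \<in> OK D"
  using OK_intro[of n 0 D] by simp

lemma OK_0: "0 \<in> OK D" using OK_of_int[of 0] by simp
lemma OK_1: "1 \<in> OK D" using OK_of_int[of 1] by simp

lemma OK_add: "a \<in> OK D \<Longrightarrow> b \<in> OK D \<Longrightarrow> a + b \<in> OK D"
  apply (erule OK_elim)+
  subgoal for x y u v
    using OK_intro[of "x+u" "y+v" D] by (simp add: algebra_simps)
  done

lemma OK_uminus: "a \<in> OK D \<Longrightarrow> - a \<in> OK D"
  apply (erule OK_elim)
  subgoal for x y
    using OK_intro[of "-x" "-y" D] by (simp add: algebra_simps)
  done

lemma OK_diff: "a \<in> OK D \<Longrightarrow> b \<in> OK D \<Longrightarrow> a - b \<in> OK D"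
  using OK_add[of a D "-b"] OK_uminus[of b D] by simp

lemma OK_mult: "a \<in> OK D \<Longrightarrow> b \<in> OK D \<Longrightarrow> a * b \<in> OK D"
  apply (erule OK_elim)+
  subgoal for x y u v
  proof -
    assume a: "a = of_int x + of_int y * ww D" and b: "b = of_int u + of_int v * ww D"
    have "a * b = of_int (x*u + y*v*nn D) + of_int (x*v + y*u + y*v*tt D) * ww D"
      unfolding a b using ww_sq[of D]
      by (simp add: algebra_simps)
    then show ?thesis using OK_intro by metis
  qed
  done

lemma ideal2_eq_OK:
  assumes "a \<in> OK D" "b \<in> OK D" "1 \<in> ideal2 D a b"
  shows "ideal2 D a b = ideal1 D 1"
proof (intro set_eqI iffI)
  fix t assume "t \<in> ideal2 D a b"
  then obtain x y where "t = a * x + b * y" "x \<in> OK D" "y \<in> OK D"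
    unfolding ideal2_def by blast
  then have "t \<in> OK D" using assms OK_add OK_mult by blast
  then show "t \<in> ideal1 D 1" unfolding ideal1_def by auto
next
  fix t assume "t \<in> ideal1 D 1"
  then have t: "t \<in> OK D" unfolding ideal1_def by auto
  obtain x y where "1 = a * x + b * y" "x \<in> OK D" "y \<in> OK D"
    using assms(3) unfolding ideal2_def by blast
  then have "t = (a * x + b * y) * t" by simp
  also have "... = a * (x * t) + b * (y * t)" by (simp add: algebra_simps)
  finally have "t = a * (x * t) + b * (y * t)" .
  moreover have "x * t \<in> OK D" "y * t \<in> OK D"
    using t OK_mult \<open>x \<in> OK D\<close> \<open>y \<in> OK D\<close> by auto
  ultimately show "t \<in> ideal2 D a b" unfolding ideal2_def by blast
qed

lemma principal_1: "principal_in D (ideal1 D 1)"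
  unfolding principal_in_def using OK_1 by blast

theorem proposition2p1:
  fixes D p :: int and z :: complex
  assumes "squarefree D"
    and "prime p"
    and "irreducible_in D (of_int p)"
    and "\<not> prime_in D (of_int p)"
    and "z \<in> OK D"
  shows "z \<in> Ip p D \<longleftrightarrow> \<not> principal_in D (ideal2 D (of_int p) z)"
proof
  define P where "P = (of_int p :: complex)"
  have PO: "P \<in> OK D" unfolding P_def by (rule OK_of_int)
  have zO: "z \<in> OK D" by fact
  assume zI: "z \<in> Ip p D"
  then obtain m where m: "m \<in> OK D" "m \<notin> ideal1 D P" "z * m \<in> ideal1 D P"
    and zn: "z \<notin> ideal1 D P"
    unfolding Ip_def P_def by blast
  show "\<not> principal_in D (ideal2 D (of_int p) z)"
  proof
    assume "principal_in D (ideal2 D (of_int p) z)"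
    then obtain g where g: "g \<in> OK D" "ideal2 D P z = ideal1 D g"
      unfolding principal_in_def P_def by blast
    have "P = P * 1 + z * 0" by simp
    then have "P \<in> ideal2 D P z" unfolding ideal2_def
      using OK_0 OK_1 by blast
    then obtain k where k: "k \<in> OK D" "P = g * k" using g unfolding ideal1_def by blast
    have "unit_in D g \<or> unit_in D k"
      using assms(3) g(1) k unfolding irreducible_in_def P_def by blast
    then show False
    proof
      assume "unit_in D k"
      then obtain u where u: "u \<in> OK D" "k * u = 1" unfolding unit_in_def by blast
      have gP: "g = P * u" using k(2) u(2) by (metis mult.assoc mult_1_right)
      have "z = P * 0 + z * 1" by simp
      then have "z \<in> ideal2 D P z" unfolding ideal2_def
        using OK_0 OK_1 by blast
      then obtain x where x: "x \<in> OK D" "z = g * x" using g unfolding ideal1_def by blast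
      have "z = P * (u * x)" "u * x \<in> OK D" using x gP u OK_mult by auto
      then have "z \<in> ideal1 D P" unfolding ideal1_def by blast
      then show False using zn by blast
    next
      assume "unit_in D g"
      then obtain v where v: "v \<in> OK D" "g * v = 1" unfolding unit_in_def by blast
      have "1 \<in> ideal1 D g" unfolding ideal1_def using v by force
      then have "1 \<in> ideal2 D P z" using g by simp
      then obtain a b where ab: "1 = P * a + z * b" "a \<in> OK D" "b \<in> OK D"
        unfolding ideal2_def by blast
      obtain c where c: "c \<in> OK D" "z * m = P * c" using m(3) unfolding ideal1_def by blast
      have "m = (P * a + z * b) * m" using ab by simp
      also have "... = P * (a * m + b * c)" using c by (simp add: algebra_simps)
      finally have "m \<in> ideal1 D P" unfolding ideal1_def
        using ab c m(1) OK_mult OK_add by blast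
      then show False using m(2) by blast
    qed
  qed
next
  define P where "P = (of_int p :: complex)"
  have PO: "P \<in> OK D" unfolding P_def by (rule OK_of_int)
  have zO: "z \<in> OK D" by fact
  assume np: "\<not> principal_in D (ideal2 D (of_int p) z)"
  then have np: "\<not> principal_in D (ideal2 D P z)" unfolding P_def .
  have not1: "1 \<notin> ideal2 D P z"
    using ideal2_eq_OK[OF PO zO] principal_1 np by metis
  have zn: "z \<notin> ideal1 D P"
  proof
    assume "z \<in> ideal1 D P"
    then obtain w where w: "w \<in> OK D" "z = P * w" unfolding ideal1_def by blast
    have "ideal2 D P z = ideal1 D P"
    proof (intro set_eqI iffI)
      fix t assume "t \<in> ideal2 D P z"
      then obtain x y where "t = P * x + z * y" "x \<in> OK D" "y \<in> OK D"
        unfolding ideal2_def by blast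
      then have "t = P * (x + w * y)" "x + w * y \<in> OK D"
        using w OK_add OK_mult by (auto simp: algebra_simps)
      then show "t \<in> ideal1 D P" unfolding ideal1_def by blast
    next
      fix t assume "t \<in> ideal1 D P"
      then obtain x where "t = P * x" "x \<in> OK D" unfolding ideal1_def by blast
      then have "t = P * x + z * 0" "0 \<in> OK D" using OK_0 by auto
      then show "t \<in> ideal2 D P z" unfolding ideal2_def using \<open>x \<in> OK D\<close> by blast
    qed
    then show False using np PO unfolding principal_in_def by blast
  qed
  have zu: "\<not> unit_in D z"
  proof
    assume "unit_in D z"
    then obtain w where "w \<in> OK D" "z * w = 1" unfolding unit_in_def by blast
    then have "1 = P * 0 + z * w" by simp
    then have "1 \<in> ideal2 D P z" unfolding ideal2_def using OK_0 \<open>w \<in> OK D\<close>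
      by blast
    then show False using not1 by blast
  qed
  obtain x y where xy: "z = of_int x + of_int y * ww D" using zO by (rule OK_elim)
  define T where "T = 2 * x + y * tt D"
  define N where "N = x * x + x * y * tt D - nn D * y * y"
  define z' where "z' = of_int T - z"
  have z'O: "z' \<in> OK D" unfolding z'_def using OK_diff OK_of_int zO by blast
  have zz': "z * z' = of_int N"
  proof -
    have "z * z' = (of_int x + of_int y * ww D) * (of_int (x + y * tt D) - of_int y * ww D)"
      unfolding z'_def T_def xy by (simp add: algebra_simps)
    also have "... = of_int x * of_int x + of_int x * of_int y * of_int (tt D)
        + of_int y * of_int y * (of_int (tt D) * ww D - ww D * ww D)"
      by (simp add: algebra_simps)
    also have "... = of_int N" unfolding ww_sq N_def by (simp add: algebra_simps)
    finally show ?thesis .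
  qed
  have pN: "p dvd N"
  proof (rule ccontr)
    assume "\<not> p dvd N"
    then have "coprime p N" using assms(2) by (simp add: prime_imp_coprime)
    then obtain u v where "u * p + v * N = 1" using bezout_int[of p] by (metis coprime_iff_gcd_eq_1)
    then have "(of_int (u * p + v * N) :: complex) = 1" by simp
    then have "(1::complex) = P * of_int u + z * (z' * of_int v)"
      unfolding P_def by (simp add: mult.assoc[symmetric] zz' algebra_simps)
    then have "1 \<in> ideal2 D P z" unfolding ideal2_def
      using OK_of_int OK_mult z'O by blast
    then show False using not1 by blast
  qed
  then obtain c where c: "N = p * c" by blast
  have zm: "z * z' \<in> ideal1 D P" unfolding ideal1_def P_def zz' c using OK_of_int by force
  have z'n: "z' \<notin> ideal1 D P"
  proof
    assume "z' \<in> ideal1 D P"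
    then obtain w where w: "w \<in> OK D" "z' = P * w" unfolding ideal1_def by blast
    show False
    proof (cases "p dvd T")
      case True
      then obtain e where e: "T = p * e" by blast
      have "z = P * (of_int e - w)" "of_int e - w \<in> OK D"
        using w e z'_def P_def OK_diff OK_of_int by (auto simp: algebra_simps)
      then have "z \<in> ideal1 D P" unfolding ideal1_def by blast
      then show False using zn by blast
    next
      case False
      then have "coprime p T" using assms(2) by (simp add: prime_imp_coprime)
      then obtain u v where "u * p + v * T = 1" using bezout_int[of p] by (metis coprime_iff_gcd_eq_1)
      then have "(of_int (u * p + v * T) :: complex) = 1" by simp
      then have "(1::complex) = of_int u * P + of_int v * (z + z')"
        unfolding P_def z'_def by simp
      then have "1 = P * (of_int u + of_int v * w) + z * of_int v"
        using w by (simp add: algebra_simps)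
      then have "1 \<in> ideal2 D P z" unfolding ideal2_def
        using OK_of_int OK_mult OK_add w(1) by blast
      then show False using not1 by blast
    qed
  qed
  show "z \<in> Ip p D" unfolding Ip_def
    using zO zu zn z'O z'n zm unfolding P_def by blast
qed

end
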